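(* Let $P$ satisfy (S1)–(S4). Let $i_1<\dots<i_\ell$ be integers and let $\bar h=(h_{i_1})_{i_1}\cdots(h_{i_\ell})_{i_\ell}\in H$ with all $h_{i_j}\ne1$. If $\bar h$ is a $[k,t]$-commutator for some integer $k\neq0$ (resp. a $[\pm,t]$-commutator), then $\bar h'=(h_{i_1})_1(h_{i_2})_2\cdots(h_{i_\ell})_\ell$ is also a $[k,t]$-commutator (resp. a $[\pm,t]$-commutator).
   Context: Conditions on a finite group $P$: (S1) for all $a_1,a_2\in P$ there are $x,y$ with $a_2=x^{-1}a_1^{-1}yxy^{-1}$; (S2) for all $a_1,a_2,a_3$ there are $u,v$ with $a_2=a_3ua_1^{-1}a_3^{-1}vu^{-1}v^{-1}$; (S3) for all $u_1,u_2,u_3,u_4\ne1$ there are $x,y,z$ with $u_4=x^{-1}u_1xy^{-1}u_2yz^{-1}u_3z$; (S4) there are $u_1,u_2,u_3\ne1$ such that there are no $x,y$ with $u_3=x^{-1}u_2^{-1}xy^{-1}u_1^{-1}y$. $H=\bigoplus_{i\in\mathbb Z}H_i$, each $H_i$ a copy of $P$, elements finitely supported sequences; $(h)_j$ is the element with $h$ at coordinate $j$ and $1$ elsewhere, and juxtaposition is the product in $H$. $\alpha((h_i)_i)=(h_{i+1})_i$. For $k>0$, $\bar h$ is a $[k,t]$-commutator if $\bar h=\bar g_1\alpha(\bar g_1^{-1})\cdots\bar g_k\alpha(\bar g_k^{-1})$ for some $\bar g_i\in H$; for $k<0$, if $\bar h=\alpha(\bar g_1)\bar g_1^{-1}\cdots\alpha(\bar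 g_{|k|})\bar g_{|k|}^{-1}$ for some $\bar g_i\in H$. $\bar h$ is a $[\pm,t]$-commutator if $\bar h=\bar g_1\alpha(\bar g_1^{-1})\alpha(\bar g_2)\bar g_2^{-1}$ or $\bar h=\alpha(\bar g_1)\bar g_1^{-1}\bar g_2\alpha(\bar g_2^{-1})$ for some $\bar g_1,\bar g_2\in H$. *)

theory Defs
  imports "HOL-Algebra.Group"
begin

definition S1 :: "('a, 'b) monoid_scheme \<Rightarrow> bool" where
  "S1 G \<longleftrightarrow> (\<forall>a1\<in>carrier G. \<forall>a2\<in>carrier G. \<exists>x\<in>carrier G. \<exists>y\<in>carrier G.
     a2 = inv\<^bsub>G\<^esub> x \<otimes>\<^bsub>G\<^esub> inv\<^bsub>G\<^esub> a1 \<otimes>\<^bsub>G\<^esub> y \<otimes>\<^bsub>G\<^esub> x \<otimes>\<^bsub>G\<^esub> inv\<^bsub>G\<^esub> y)"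

definition S2 :: "('a, 'b) monoid_scheme \<Rightarrow> bool" where
  "S2 G \<longleftrightarrow> (\<forall>a1\<in>carrier G. \<forall>a2\<in>carrier G. \<forall>a3\<in>carrier G. \<exists>u\<in>carrier G. \<exists>v\<in>carrier G.
     a2 = a3 \<otimes>\<^bsub>G\<^esub> u \<otimes>\<^bsub>G\<^esub> inv\<^bsub>G\<^esub> a1 \<otimes>\<^bsub>G\<^esub> inv\<^bsub>G\<^esub> a3 \<otimes>\<^bsub>G\<^esub> v
          \<otimes>\<^bsub>G\<^esub> inv\<^bsub>G\<^esub> u \<otimes>\<^bsub>G\<^esub> inv\<^bsub>G\<^esub> v)"

definition S3 :: "('a, 'b) monoid_scheme \<Rightarrow> bool" where
  "S3 G \<longleftrightarrow> (\<forall>u1\<in>carrier G. \<forall>u2\<in>carrier G. \<forall>u3\<in>carrier G. \<forall>u4\<in>carrier G.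
     u1 \<noteq> \<one>\<^bsub>G\<^esub> \<longrightarrow> u2 \<noteq> \<one>\<^bsub>G\<^esub> \<longrightarrow> u3 \<noteq> \<one>\<^bsub>G\<^esub> \<longrightarrow> u4 \<noteq> \<one>\<^bsub>G\<^esub> \<longrightarrow>
     (\<exists>x\<in>carrier G. \<exists>y\<in>carrier G. \<exists>z\<in>carrier G.
        u4 = inv\<^bsub>G\<^esub> x \<otimes>\<^bsub>G\<^esub> u1 \<otimes>\<^bsub>G\<^esub> x \<otimes>\<^bsub>G\<^esub> inv\<^bsub>G\<^esub> y \<otimes>\<^bsub>G\<^esub> u2 \<otimes>\<^bsub>G\<^esub> y
             \<otimes>\<^bsub>G\<^esub> inv\<^bsub>G\<^esub> z \<otimes>\<^bsub>G\<^esub> u3 \<otimes>\<^bsub>G\<^esub> z))"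

definition S4 :: "('a, 'b) monoid_scheme \<Rightarrow> bool" where
  "S4 G \<longleftrightarrow> (\<exists>u1\<in>carrier G. \<exists>u2\<in>carrier G. \<exists>u3\<in>carrier G.
     u1 \<noteq> \<one>\<^bsub>G\<^esub> \<and> u2 \<noteq> \<one>\<^bsub>G\<^esub> \<and> u3 \<noteq> \<one>\<^bsub>G\<^esub> \<and>
     \<not> (\<exists>x\<in>carrier G. \<exists>y\<in>carrier G.
        u3 = inv\<^bsub>G\<^esub> x \<otimes>\<^bsub>G\<^esub> inv\<^bsub>G\<^esub> u2 \<otimes>\<^bsub>G\<^esub> x \<otimes>\<^bsub>G\<^esub> inv\<^bsub>G\<^esub> y
             \<otimes>\<^bsub>G\<^esub> inv\<^bsub>G\<^esub> u1 \<otimes>\<^bsub>G\<^esub> y))"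

definition Hcarr :: "('a, 'b) monoid_scheme \<Rightarrow> (int \<Rightarrow> 'a) set" where
  "Hcarr G = {f. (\<forall>i. f i \<in> carrier G) \<and> finite {i. f i \<noteq> \<one>\<^bsub>G\<^esub>}}"

definition Hmul :: "('a, 'b) monoid_scheme \<Rightarrow> (int \<Rightarrow> 'a) \<Rightarrow> (int \<Rightarrow> 'a) \<Rightarrow> (int \<Rightarrow> 'a)" where
  "Hmul G f g = (\<lambda>i. f i \<otimes>\<^bsub>G\<^esub> g i)"

definition Hinv :: "('a, 'b) monoid_scheme \<Rightarrow> (int \<Rightarrow> 'a) \<Rightarrow> (int \<Rightarrow> 'a)" where
  "Hinv G f = (\<lambda>i. inv\<^bsub>G\<^esub> f i)"

definition Hone :: "('a, 'b) monoid_scheme \<Rightarrow> (int \<Rightarrow> 'a)" where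
  "Hone G = (\<lambda>i. \<one>\<^bsub>G\<^esub>)"

definition shift :: "(int \<Rightarrow> 'a) \<Rightarrow> (int \<Rightarrow> 'a)" where
  "shift f = (\<lambda>i. f (i + 1))"

definition sgl :: "('a, 'b) monoid_scheme \<Rightarrow> int \<Rightarrow> 'a \<Rightarrow> (int \<Rightarrow> 'a)" where
  "sgl G j h = (\<lambda>i. if i = j then h else \<one>\<^bsub>G\<^esub>)"

fun Hprod_list :: "('a, 'b) monoid_scheme \<Rightarrow> (int \<Rightarrow> 'a) list \<Rightarrow> (int \<Rightarrow> 'a)" where
  "Hprod_list G [] = Hone G"
| "Hprod_list G (f # fs) = Hmul G f (Hprod_list G fs)"

definition kt_comm :: "('a, 'b) monoid_scheme \<Rightarrow> int \<Rightarrow> (int \<Rightarrow> 'a) \<Rightarrow> bool" where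
  "kt_comm G k h \<longleftrightarrow>
     (k > 0 \<and> (\<exists>gs. length gs = nat k \<and> set gs \<subseteq> Hcarr G \<and>
        h = Hprod_list G (map (\<lambda>g. Hmul G g (shift (Hinv G g))) gs))) \<or>
     (k < 0 \<and> (\<exists>gs. length gs = nat (- k) \<and> set gs \<subseteq> Hcarr G \<and>
        h = Hprod_list G (map (\<lambda>g. Hmul G (shift g) (Hinv G g)) gs)))"

definition pm_comm :: "('a, 'b) monoid_scheme \<Rightarrow> (int \<Rightarrow> 'a) \<Rightarrow> bool" where
  "pm_comm G h \<longleftrightarrow> (\<exists>g1\<in>Hcarr G. \<exists>g2\<in>Hcarr G.
     h = Hprod_list G [g1, shift (Hinv G g1), shift g2, Hinv G g2] \<or>
     h = Hprod_list G [shift g1, Hinv G g1, g2, shift (Hinv G g2)])"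

end

theory Submission imports Defs begin

fun pu :: "('a,'b) monoid_scheme \<Rightarrow> (int \<Rightarrow> 'a) \<Rightarrow> int \<Rightarrow> nat \<Rightarrow> 'a" where
  "pu G f M 0 = \<one>\<^bsub>G\<^esub>"
| "pu G f M (Suc n) = f M \<otimes>\<^bsub>G\<^esub> pu G f (M+1) n"

definition HP :: "('a,'b) monoid_scheme \<Rightarrow> int list \<Rightarrow> 'a list \<Rightarrow> (int \<Rightarrow> 'a)" where
  "HP G is hs = Hprod_list G (map (\<lambda>(i, h). sgl G i h) (zip is hs))"

context group begin

lemma canc1 [simp]: "x \<in> carrier G \<Longrightarrow> y \<in> carrier G \<Longrightarrow> x \<otimes> (inv x \<otimes> y) = y"
  by (simp add: m_assoc[symmetric])
lemma canc2 [simp]: "x \<in> carrier G \<Longrightarrow> y \<in> carrier G \<Longrightarrow> inv x \<otimes> (x \<otimes> y) = y"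
  by (simp add: m_assoc[symmetric])

lemma pu_closed: "(\<And>i. f i \<in> carrier G) \<Longrightarrow> pu G f M n \<in> carrier G"
  by (induction n arbitrary: M) auto

lemma pu_add: "(\<And>i. f i \<in> carrier G) \<Longrightarrow> pu G f M (a + b) = pu G f M a \<otimes> pu G f (M + int a) b"
proof (induction a arbitrary: M)
  case (Suc a)
  have e: "M + 1 + int a = M + int (Suc a)" by simp
  show ?case using Suc by (simp add: pu_closed m_assoc e)
qed (simp_all add: pu_closed)

lemma pu_cong: "(\<And>i. M \<le> i \<Longrightarrow> i < M + int n \<Longrightarrow> f i = g i) \<Longrightarrow> pu G f M n = pu G g M n"
proof (induction n arbitrary: M)
  case (Suc n)
  have "pu G f (M+1) n = pu G g (M+1) n" by (rule Suc.IH) (use Suc.prems in auto)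
  moreover have "f M = g M" using Suc.prems by auto
  ultimately show ?case by simp
qed (simp_all add: pu_closed)

lemma pu_ones: "(\<And>i. M \<le> i \<Longrightarrow> i < M + int n \<Longrightarrow> f i = \<one>) \<Longrightarrow> pu G f M n = \<one>"
proof -
  assume a: "\<And>i. M \<le> i \<Longrightarrow> i < M + int n \<Longrightarrow> f i = \<one>"
  have "pu G f M n = pu G (\<lambda>_. \<one>) M n" by (rule pu_cong) (use a in auto)
  also have "\<dots> = \<one>" by (induction n arbitrary: M) auto
  finally show ?thesis .
qed

lemma pu_tele0: "(\<And>i. g i \<in> carrier G)
   \<Longrightarrow> pu G (\<lambda>i. g i \<otimes> inv (g (i+1))) M n = g M \<otimes> inv (g (M + int n))"
proof (induction n arbitrary: M)
  case 0 then show ?case by simp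
next
  case (Suc n)
  have "pu G (\<lambda>i. g i \<otimes> inv (g (i+1))) M (Suc n) = (g M \<otimes> inv (g (M+1))) \<otimes> (g (M+1) \<otimes> inv (g (M + 1 + int n)))"
    using Suc by simp
  also have "\<dots> = g M \<otimes> inv (g (M + int (Suc n)))"
    using Suc.prems by (simp add: m_assoc add.assoc)
  finally show ?case .
qed

lemma pu_tele: "(\<And>i. g i \<in> carrier G) \<Longrightarrow> (\<And>i. h i = g i \<otimes> inv (g (i+1)))
   \<Longrightarrow> pu G h M n = g M \<otimes> inv (g (M + int n))"
proof -
  assume "\<And>i. g i \<in> carrier G" "\<And>i. h i = g i \<otimes> inv (g (i+1))"
  then have "h = (\<lambda>i. g i \<otimes> inv (g (i+1)))" by auto
  then show ?thesis using pu_tele0 \<open>\<And>i. g i \<in> carrier G\<close> by simp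
qed

lemma build:
  assumes f: "\<And>i. f i \<in> carrier G"
    and supp: "\<And>i. f i \<noteq> \<one> \<Longrightarrow> M \<le> i \<and> i < N"
    and tot: "pu G f M (nat (N - M)) = \<one>"
  shows "\<exists>w\<in>Hcarr G. \<forall>i. f i = w i \<otimes> inv (w (i+1))"
proof -
  define w where "w i = pu G f i (nat (N - i))" for i
  have wc: "w i \<in> carrier G" for i unfolding w_def by (rule pu_closed[OF f])
  have eq: "f i = w i \<otimes> inv (w (i+1))" for i
  proof (cases "i < N")
    case True
    then have "nat (N - i) = Suc (nat (N - (i+1)))" by simp
    then have "w i = f i \<otimes> w (i+1)" unfolding w_def by simp
    then show ?thesis using f wc by (simp add: m_assoc)
  next
    case False
    then have "w i = \<one>" "w (i+1) = \<one>" unfolding w_def by auto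
    moreover have "f i = \<one>" using supp False by force
    ultimately show ?thesis by simp
  qed
  have "w i = \<one>" if "\<not> (M \<le> i \<and> i < N)" for i
  proof (cases "i < M")
    case True
    have "nat (N - i) = nat (M - i) + nat (N - M)" if "M \<le> N" using True that by simp
    show ?thesis
    proof (cases "M \<le> N")
      case True
      have "nat (N - i) = nat (M - i) + nat (N - M)" using True \<open>i<M\<close> by simp
      then have "w i = pu G f i (nat (M - i)) \<otimes> pu G f (i + int (nat (M-i))) (nat (N - M))"
        unfolding w_def using pu_add[OF f] by simp
      also have "i + int (nat (M-i)) = M" using \<open>i<M\<close> by simp
      also have "pu G f i (nat (M - i)) = \<one>" by (rule pu_ones) (use supp \<open>i<M\<close> in force)
      finally show ?thesis using tot pu_closed[OF f] by simp
    next
      case False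
      then show ?thesis unfolding w_def by (rule_tac pu_ones) (use supp in force)
    qed
  next
    case False
    then have "i \<ge> N" using that by simp
    then show ?thesis unfolding w_def by simp
  qed
  then have "{i. w i \<noteq> \<one>} \<subseteq> {M..<N}" by force
  then have "w \<in> Hcarr G" unfolding Hcarr_def using wc finite_subset by auto
  then show ?thesis using eq by blast
qed


lemma Hprod_list_app: "Hprod_list G fs i = foldr (\<lambda>f a. f i \<otimes> a) fs \<one>"
  by (induction fs) (auto simp: Hmul_def Hone_def)

lemma HP_Cons: "HP G (i#xs) (h#hs) j = sgl G i h j \<otimes> HP G xs hs j"
  by (simp add: HP_def Hmul_def)

lemma HP_Nil1: "HP G [] hs j = \<one>" by (simp add: HP_def Hone_def)
lemma HP_Nil2: "HP G xs [] j = \<one>" by (simp add: HP_def Hone_def)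

lemma HP_closed: "set hs \<subseteq> carrier G \<Longrightarrow> HP G xs hs j \<in> carrier G"
proof (induction xs arbitrary: hs)
  case Nil then show ?case by (simp add: HP_Nil1)
next
  case (Cons i xs)
  then show ?case by (cases hs) (auto simp: HP_Nil2 HP_Cons sgl_def)
qed

lemma HP_out: "set hs \<subseteq> carrier G \<Longrightarrow> j \<notin> set xs \<Longrightarrow> HP G xs hs j = \<one>"
proof (induction xs arbitrary: hs)
  case Nil then show ?case by (simp add: HP_Nil1)
next
  case (Cons i xs)
  then show ?case by (cases hs) (auto simp: HP_Nil2 HP_Cons sgl_def)
qed

lemma HP_Hcarr: "set hs \<subseteq> carrier G \<Longrightarrow> HP G xs hs \<in> Hcarr G"
proof -
  assume a: "set hs \<subseteq> carrier G"
  have "{j. HP G xs hs j \<noteq> \<one>} \<subseteq> set xs" using HP_out[OF a] by blast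
  then show ?thesis unfolding Hcarr_def using HP_closed[OF a] finite_subset[OF _ List.finite_set] by auto
qed

lemma HP_map:
  assumes "distinct xs" "length xs = length hs" "set hs \<subseteq> carrier G"
    and "\<And>i. \<phi> i \<one> = \<one>" and "\<And>i x. x \<in> carrier G \<Longrightarrow> \<phi> i x \<in> carrier G"
  shows "(\<lambda>j. \<phi> j (HP G xs hs j)) = HP G xs (map2 \<phi> xs hs)"
  using assms(1-3)
proof (induction xs arbitrary: hs)
  case Nil then show ?case by (simp add: HP_Nil1 assms(4))
next
  case (Cons i xs)
  then obtain h hs' where hs: "hs = h # hs'" by (cases hs) auto
  have c: "set (map2 \<phi> xs hs') \<subseteq> carrier G" using Cons.prems hs assms(5)
    by (auto elim!: in_set_zipE)
  show ?case
  proof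
    fix j
    show "\<phi> j (HP G (i # xs) hs j) = HP G (i # xs) (map2 \<phi> (i # xs) hs) j"
    proof (cases "j = i")
      case True
      then show ?thesis using Cons.prems hs HP_out[of hs' i xs] HP_out[OF c, of i] assms(5)
        by (simp add: HP_Cons sgl_def)
    next
      case False
      have hc': "set hs' \<subseteq> carrier G" using Cons.prems hs by auto
      have "\<phi> j (HP G xs hs' j) = HP G xs (map2 \<phi> xs hs') j"
        using Cons.IH[of hs'] Cons.prems hs by (auto dest: fun_cong[where x=j])
      then show ?thesis using False hs Cons.prems HP_closed[OF hc'] HP_closed[OF c]
        by (simp add: HP_Cons sgl_def)
    qed
  qed
qed

lemma foldr_closed: "set xs \<subseteq> carrier G \<Longrightarrow> foldr (\<otimes>) xs \<one> \<in> carrier G"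
  by (induction xs) auto

lemma HP_pu:
  assumes "sorted_wrt (<) xs" "length xs = length hs" "set hs \<subseteq> carrier G"
    and "\<And>i. i \<in> set xs \<Longrightarrow> M \<le> i \<and> i < M + int n"
  shows "pu G (HP G xs hs) M n = foldr (\<otimes>) hs \<one>"
  using assms
proof (induction xs arbitrary: hs M n)
  case Nil
  then show ?case by (simp add: HP_Nil1 pu_ones)
next
  case (Cons i xs)
  then obtain h hs' where hs: "hs = h # hs'" by (cases hs) auto
  have hc: "h \<in> carrier G" "set hs' \<subseteq> carrier G" using Cons.prems hs by auto
  define f where "f = HP G (i#xs) hs"
  have fc: "\<And>j. f j \<in> carrier G" unfolding f_def using HP_closed Cons.prems by blast
  have iM: "M \<le> i" "i < M + int n" using Cons.prems(4) by auto
  define a where "a = nat (i - M)"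
  define b where "b = nat (M + int n - i - 1)"
  have n: "n = a + Suc b" using iM unfolding a_def b_def by simp
  have Ma: "M + int a = i" using iM unfolding a_def by simp
  have gt: "\<And>j. j \<in> set xs \<Longrightarrow> i < j" using Cons.prems(1) by auto
  have "i \<notin> set xs" using gt by blast
  have "pu G f M n = pu G f M a \<otimes> (f i \<otimes> pu G f (i+1) b)"
    using pu_add[OF fc, where M=M and a=a and b="Suc b"] n Ma by simp
  also have "pu G f M a = \<one>"
  proof (rule pu_ones)
    fix j assume "M \<le> j" "j < M + int a"
    then have "j < i" using Ma by simp
    then have "j \<notin> set xs" using gt by force
    then show "f j = \<one>" unfolding f_def hs using \<open>j < i\<close> HP_out[OF hc(2)]
      by (auto simp: HP_Cons sgl_def)
  qed
  also have "f i = h" using \<open>i \<notin> set xs\<close> unfolding f_def hs using HP_out[OF hc(2)] hc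
      by (auto simp: HP_Cons sgl_def)
  also have "pu G f (i+1) b = pu G (HP G xs hs') (i+1) b"
    by (rule pu_cong) (auto simp: f_def hs HP_Cons sgl_def HP_closed[OF hc(2)])
  also have "\<dots> = foldr (\<otimes>) hs' \<one>"
  proof (rule Cons.IH)
    show "sorted_wrt (<) xs" using Cons.prems(1) by simp
    show "length xs = length hs'" using Cons.prems(2) hs by simp
    show "set hs' \<subseteq> carrier G" by (rule hc(2))
    fix j assume j: "j \<in> set xs"
    then have "i < j" by (rule gt)
    moreover have "j < M + int n" using Cons.prems(4) j by simp
    ultimately show "i + 1 \<le> j \<and> j < i + 1 + int b" using n Ma by simp
  qed
  finally show ?case using hs hc foldr_closed[OF hc(2)] by (simp add: f_def)
qed


lemma int_bound: "finite (S::int set) \<Longrightarrow> \<exists>B. 0 < B \<and> (\<forall>i\<in>S. -B < i \<and> i < B)"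
proof -
  assume fS: "finite S"
  define B where "B = Max (abs ` S \<union> {0}) + 1"
  have m: "\<forall>i\<in>S. \<bar>i\<bar> \<le> Max (abs ` S \<union> {0})" "0 \<le> Max (abs ` S \<union> {0})" using fS by auto
  have "\<forall>i\<in>S. \<bar>i\<bar> < B" unfolding B_def using m(1) by fastforce
  moreover have "0 < B" unfolding B_def using m(2) by simp
  ultimately show ?thesis by (intro exI[of _ B]) (auto simp: abs_less_iff)
qed

definition T1 :: "(int \<Rightarrow> 'a) \<Rightarrow> bool" where
  "T1 f \<longleftrightarrow> (\<exists>w\<in>Hcarr G. \<forall>i. f i = w i \<otimes> inv (w (i+1)))"

lemma Hcarr_closed: "w \<in> Hcarr G \<Longrightarrow> w i \<in> carrier G"
  unfolding Hcarr_def by auto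

lemma Hcarr_fin: "w \<in> Hcarr G \<Longrightarrow> finite {i. w i \<noteq> \<one>}"
  unfolding Hcarr_def by auto

lemma T1_HP:
  assumes s1: "sorted_wrt (<) xs" and l1: "length xs = length hs"
    and s2: "sorted_wrt (<) ys" and l2: "length ys = length hs"
    and hc: "set hs \<subseteq> carrier G"
    and T: "T1 (HP G xs hs)"
  shows "T1 (HP G ys hs)"
proof -
  obtain w where w: "w \<in> Hcarr G" "\<And>i. HP G xs hs i = w i \<otimes> inv (w (i+1))"
    using T unfolding T1_def by blast
  obtain B where B: "0 < B" "\<forall>i\<in>{i. w i \<noteq> \<one>} \<union> set xs. -B < i \<and> i < B"
    using int_bound[of "{i. w i \<noteq> \<one>} \<union> set xs"] Hcarr_fin[OF w(1)] by auto
  have "pu G (HP G xs hs) (-B) (nat (2*B)) = w (-B) \<otimes> inv (w (-B + int (nat (2*B))))"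
    by (rule pu_tele) (use w Hcarr_closed in auto)
  also have "-B + int (nat (2*B)) = B" using B by simp
  also have "w (-B) = \<one>" using B by force
  also have "w B = \<one>" using B by force
  finally have p1: "pu G (HP G xs hs) (-B) (nat (2*B)) = \<one>" by simp
  have "pu G (HP G xs hs) (-B) (nat (2*B)) = foldr (\<otimes>) hs \<one>"
  proof (rule HP_pu[OF s1 l1 hc])
    fix i assume "i \<in> set xs"
    then have "-B < i \<and> i < B" using B(2) by blast
    then show "- B \<le> i \<and> i < - B + int (nat (2 * B))" using B(1) by simp
  qed
  then have tot: "foldr (\<otimes>) hs \<one> = \<one>" using p1 by simp
  obtain C where C: "0 < C" "\<forall>i\<in>set ys. -C < i \<and> i < C"
    using int_bound[of "set ys"] by auto
  have "pu G (HP G ys hs) (-C) (nat (C - -C)) = foldr (\<otimes>) hs \<one>"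
    by (rule HP_pu[OF s2 l2 hc]) (use C in auto)
  then have t2: "pu G (HP G ys hs) (-C) (nat (C - -C)) = \<one>" using tot by simp
  have "\<exists>w\<in>Hcarr G. \<forall>i. HP G ys hs i = w i \<otimes> inv (w (i+1))"
  proof (rule build[OF _ _ t2])
    show "\<And>i. HP G ys hs i \<in> carrier G" by (rule HP_closed[OF hc])
    fix i assume "HP G ys hs i \<noteq> \<one>"
    then have "i \<in> set ys" using HP_out[OF hc] by blast
    then show "- C \<le> i \<and> i < C" using C by force
  qed
  then show ?thesis unfolding T1_def .
qed

lemma kt1_iff: "(\<And>i. f i \<in> carrier G) \<Longrightarrow> kt_comm G 1 f \<longleftrightarrow> T1 f"
proof
  assume fc: "\<And>i. f i \<in> carrier G"
  {
    assume "kt_comm G 1 f"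
    then obtain gs where gs: "length gs = 1" "set gs \<subseteq> Hcarr G"
       "f = Hprod_list G (map (\<lambda>g. Hmul G g (shift (Hinv G g))) gs)"
      unfolding kt_comm_def by auto
    then obtain g where g: "gs = [g]" by (cases gs) auto
    with gs have "g \<in> Hcarr G" by auto
    moreover have "\<forall>i. f i = g i \<otimes> inv (g (i+1))" using gs g Hcarr_closed[OF \<open>g \<in> Hcarr G\<close>]
      by (simp add: Hmul_def shift_def Hinv_def Hone_def)
    ultimately show "T1 f" unfolding T1_def by blast
  }
  {
    assume "T1 f"
    then obtain g where g: "g \<in> Hcarr G" "\<And>i. f i = g i \<otimes> inv (g (i+1))" unfolding T1_def by blast
    have "f = Hprod_list G (map (\<lambda>g. Hmul G g (shift (Hinv G g))) [g])"
      using g Hcarr_closed[OF g(1)] by (auto simp: Hmul_def shift_def Hinv_def Hone_def)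
    then have "\<exists>gs. length gs = nat 1 \<and> set gs \<subseteq> Hcarr G \<and> f = Hprod_list G (map (\<lambda>g. Hmul G g (shift (Hinv G g))) gs)"
      using g(1) by (intro exI[of _ "[g]"]) auto
    then show "kt_comm G 1 f" unfolding kt_comm_def by simp
  }
qed

lemma ktm1_iff: "(\<And>i. f i \<in> carrier G) \<Longrightarrow> kt_comm G (-1) f \<longleftrightarrow> T1 (\<lambda>i. inv (f i))"
proof
  assume fc: "\<And>i. f i \<in> carrier G"
  {
    assume "kt_comm G (-1) f"
    then obtain gs where gs: "length gs = 1" "set gs \<subseteq> Hcarr G"
       "f = Hprod_list G (map (\<lambda>g. Hmul G (shift g) (Hinv G g)) gs)"
      unfolding kt_comm_def by auto
    then obtain g where g: "gs = [g]" by (cases gs) auto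
    with gs have "g \<in> Hcarr G" by auto
    moreover have "\<forall>i. inv (f i) = g i \<otimes> inv (g (i+1))" using gs g Hcarr_closed[OF \<open>g \<in> Hcarr G\<close>]
      by (simp add: Hmul_def shift_def Hinv_def Hone_def inv_mult_group)
    ultimately show "T1 (\<lambda>i. inv (f i))" unfolding T1_def by blast
  }
  {
    assume "T1 (\<lambda>i. inv (f i))"
    then obtain g where g: "g \<in> Hcarr G" "\<And>i. inv (f i) = g i \<otimes> inv (g (i+1))" unfolding T1_def by blast
    have "f i = g (i+1) \<otimes> inv (g i)" for i
    proof -
      have "f i = inv (inv (f i))" using fc by simp
      also have "\<dots> = g (i+1) \<otimes> inv (g i)" using g Hcarr_closed[OF g(1)] by (simp add: inv_mult_group)
      finally show ?thesis .
    qed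
    then have "f = Hprod_list G (map (\<lambda>g. Hmul G (shift g) (Hinv G g)) [g])"
      using g Hcarr_closed[OF g(1)] by (auto simp: Hmul_def shift_def Hinv_def Hone_def)
    then have "\<exists>gs. length gs = nat (- (-1)) \<and> set gs \<subseteq> Hcarr G \<and> f = Hprod_list G (map (\<lambda>g. Hmul G (shift g) (Hinv G g)) gs)"
      using g(1) by (intro exI[of _ "[g]"]) auto
    then show "kt_comm G (-1) f" unfolding kt_comm_def by simp
  }
qed


definition Qc :: "'a list \<Rightarrow> bool" where
  "Qc hs \<longleftrightarrow> (\<exists>cs. length cs = length hs \<and> set cs \<subseteq> carrier G \<and>
      foldr (\<otimes>) (map2 (\<lambda>c h. inv c \<otimes> h \<otimes> c) cs hs) \<one> = \<one>)"

lemma map2_closed: "set cs \<subseteq> carrier G \<Longrightarrow> set hs \<subseteq> carrier G \<Longrightarrow>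
   set (map2 (\<lambda>c h. inv c \<otimes> h \<otimes> c) cs hs) \<subseteq> carrier G"
  by (auto elim!: in_set_zipE)

lemma conj_HP:
  assumes "distinct xs" "length xs = length hs" "set hs \<subseteq> carrier G" "\<And>i. c i \<in> carrier G"
  shows "(\<lambda>i. inv (c i) \<otimes> HP G xs hs i \<otimes> c i) = HP G xs (map2 (\<lambda>c h. inv c \<otimes> h \<otimes> c) (map c xs) hs)"
proof -
  have "(\<lambda>i. inv (c i) \<otimes> HP G xs hs i \<otimes> c i) = HP G xs (map2 (\<lambda>i x. inv (c i) \<otimes> x \<otimes> c i) xs hs)"
    by (rule HP_map[OF assms(1-3)]) (use assms(4) in auto)
  also have "map2 (\<lambda>i x. inv (c i) \<otimes> x \<otimes> c i) xs hs = map2 (\<lambda>c h. inv c \<otimes> h \<otimes> c) (map c xs) hs"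
    by (simp add: zip_map1 map_map o_def case_prod_beta)
  finally show ?thesis .
qed

lemma Q_of:
  assumes s1: "sorted_wrt (<) xs" and l1: "length xs = length hs" and hc: "set hs \<subseteq> carrier G"
    and cc: "\<And>i. c i \<in> carrier G" and w: "w \<in> Hcarr G"
    and eq: "\<And>i. inv (c i) \<otimes> HP G xs hs i \<otimes> c i = w i \<otimes> inv (w (i+1))"
  shows "Qc hs"
proof -
  have d: "distinct xs" using s1 by (simp add: strict_sorted_iff)
  define hs2 where "hs2 = map2 (\<lambda>c h. inv c \<otimes> h \<otimes> c) (map c xs) hs"
  have h2c: "set hs2 \<subseteq> carrier G" unfolding hs2_def by (rule map2_closed) (use cc hc in auto)
  have l2: "length xs = length hs2" unfolding hs2_def using l1 by simp
  have ceq: "(\<lambda>i. inv (c i) \<otimes> HP G xs hs i \<otimes> c i) = HP G xs hs2"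
    unfolding hs2_def by (rule conj_HP[OF d l1 hc cc])
  obtain B where B: "0 < B" "\<forall>i\<in>{i. w i \<noteq> \<one>} \<union> set xs. -B < i \<and> i < B"
    using int_bound[of "{i. w i \<noteq> \<one>} \<union> set xs"] Hcarr_fin[OF w] by auto
  have "pu G (HP G xs hs2) (-B) (nat (2*B)) = w (-B) \<otimes> inv (w (-B + int (nat (2*B))))"
  proof (rule pu_tele)
    show "\<And>i. w i \<in> carrier G" using w Hcarr_closed by auto
    fix i
    have "HP G xs hs2 i = inv (c i) \<otimes> HP G xs hs i \<otimes> c i" using fun_cong[OF ceq, of i] by simp
    then show "HP G xs hs2 i = w i \<otimes> inv (w (i + 1))" using eq by simp
  qed
  also have "-B + int (nat (2*B)) = B" using B by simp
  also have "w (-B) = \<one>" using B by force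
  also have "w B = \<one>" using B by force
  finally have p1: "pu G (HP G xs hs2) (-B) (nat (2*B)) = \<one>" by simp
  have "pu G (HP G xs hs2) (-B) (nat (2*B)) = foldr (\<otimes>) hs2 \<one>"
  proof (rule HP_pu[OF s1 l2 h2c])
    fix i assume "i \<in> set xs"
    then have "-B < i \<and> i < B" using B(2) by blast
    then show "- B \<le> i \<and> i < - B + int (nat (2 * B))" using B(1) by simp
  qed
  then have "foldr (\<otimes>) hs2 \<one> = \<one>" using p1 by simp
  then show ?thesis unfolding Qc_def hs2_def using l1 cc by (intro exI[of _ "map c xs"]) auto
qed

lemma from_Q:
  assumes s2: "sorted_wrt (<) ys" and l2: "length ys = length hs" and hc: "set hs \<subseteq> carrier G"
    and Q: "Qc hs"
  shows "\<exists>c w. (\<forall>i. c i \<in> carrier G) \<and> finite {i. c i \<noteq> \<one>} \<and> w \<in> Hcarr G \<and>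
            (\<forall>i. inv (c i) \<otimes> HP G ys hs i \<otimes> c i = w i \<otimes> inv (w (i+1)))"
proof -
  obtain cs where cs: "length cs = length hs" "set cs \<subseteq> carrier G"
     "foldr (\<otimes>) (map2 (\<lambda>c h. inv c \<otimes> h \<otimes> c) cs hs) \<one> = \<one>"
    using Q unfolding Qc_def by blast
  have d: "distinct ys" using s2 by (simp add: strict_sorted_iff)
  define c where "c i = (if i \<in> set ys then cs ! (THE j. j < length ys \<and> ys ! j = i) else \<one>)" for i
  have cc: "\<And>i. c i \<in> carrier G"
  proof -
    fix i
    show "c i \<in> carrier G"
    proof (cases "i \<in> set ys")
      case True
      then obtain j where j: "j < length ys" "ys ! j = i" by (auto simp: in_set_conv_nth)
      then have "(THE j. j < length ys \<and> ys ! j = i) = j" using d by (auto simp: nth_eq_iff_index_eq)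
      then show ?thesis unfolding c_def using True j cs l2 by (auto intro: nth_mem)
    qed (simp add: c_def)
  qed
  have mc: "map c ys = cs"
  proof (rule nth_equalityI)
    show "length (map c ys) = length cs" using cs l2 by simp
    fix j assume "j < length (map c ys)"
    then have j: "j < length ys" by simp
    then have "(THE k. k < length ys \<and> ys ! k = ys ! j) = j" using d by (auto simp: nth_eq_iff_index_eq)
    then show "map c ys ! j = cs ! j" using j by (simp add: c_def)
  qed
  have cf: "finite {i. c i \<noteq> \<one>}"
    by (rule finite_subset[of _ "set ys"]) (auto simp: c_def split: if_splits)
  define hs2 where "hs2 = map2 (\<lambda>c h. inv c \<otimes> h \<otimes> c) cs hs"
  have h2c: "set hs2 \<subseteq> carrier G" unfolding hs2_def by (rule map2_closed) (use cs hc in auto)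
  have l3: "length ys = length hs2" unfolding hs2_def using l2 cs by simp
  have ceq: "(\<lambda>i. inv (c i) \<otimes> HP G ys hs i \<otimes> c i) = HP G ys hs2"
    unfolding hs2_def mc[symmetric] by (rule conj_HP[OF d l2 hc cc])
  obtain C where C: "0 < C" "\<forall>i\<in>set ys. -C < i \<and> i < C"
    using int_bound[of "set ys"] by auto
  have "pu G (HP G ys hs2) (-C) (nat (C - -C)) = foldr (\<otimes>) hs2 \<one>"
    by (rule HP_pu[OF s2 l3 h2c]) (use C in auto)
  then have t2: "pu G (HP G ys hs2) (-C) (nat (C - -C)) = \<one>" using cs(3) by (simp add: hs2_def)
  have "\<exists>w\<in>Hcarr G. \<forall>i. HP G ys hs2 i = w i \<otimes> inv (w (i+1))"
  proof (rule build[OF _ _ t2])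
    show "\<And>i. HP G ys hs2 i \<in> carrier G" by (rule HP_closed[OF h2c])
    fix i assume "HP G ys hs2 i \<noteq> \<one>"
    then have "i \<in> set ys" using HP_out[OF h2c] by blast
    then show "- C \<le> i \<and> i < C" using C by force
  qed
  then obtain w where "w \<in> Hcarr G" "\<forall>i. HP G ys hs2 i = w i \<otimes> inv (w (i+1))" by blast
  then show ?thesis using cc cf ceq[symmetric] by (intro exI[of _ c] exI[of _ w]) (auto dest: fun_cong)
qed


lemma inv_HP:
  assumes "distinct xs" "length xs = length hs" "set hs \<subseteq> carrier G"
  shows "(\<lambda>i. inv (HP G xs hs i)) = HP G xs (map (\<lambda>x. inv x) hs)"
proof -
  have "(\<lambda>i. inv (HP G xs hs i)) = HP G xs (map2 (\<lambda>i x. inv x) xs hs)"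
    by (rule HP_map[OF assms]) auto
  also have "map2 (\<lambda>i x. inv x) xs hs = map (\<lambda>x. inv x) hs"
  proof -
    have "map2 (\<lambda>i x. inv x) xs hs = map (\<lambda>x. inv x) (map snd (zip xs hs))"
      by (simp add: case_prod_beta)
    then show ?thesis using assms(2) by simp
  qed
  finally show ?thesis .
qed

lemma Hprod4: "Hprod_list G [a, b, c, d] i = a i \<otimes> (b i \<otimes> (c i \<otimes> (d i \<otimes> \<one>)))"
  by (simp add: Hmul_def Hone_def)

lemma pm_HP:
  assumes s1: "sorted_wrt (<) xs" and l1: "length xs = length hs"
    and s2: "sorted_wrt (<) ys" and l2: "length ys = length hs"
    and hc: "set hs \<subseteq> carrier G"
    and P: "pm_comm G (HP G xs hs)"
  shows "pm_comm G (HP G ys hs)"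
proof -
  have d1: "distinct xs" using s1 by (simp add: strict_sorted_iff)
  have d2: "distinct ys" using s2 by (simp add: strict_sorted_iff)
  have ihc: "set (map (\<lambda>x. inv x) hs) \<subseteq> carrier G" using hc by auto
  obtain g1 g2 where g: "g1 \<in> Hcarr G" "g2 \<in> Hcarr G"
    and disj: "HP G xs hs = Hprod_list G [g1, shift (Hinv G g1), shift g2, Hinv G g2] \<or>
       HP G xs hs = Hprod_list G [shift g1, Hinv G g1, g2, shift (Hinv G g2)]"
    using P unfolding pm_comm_def by blast
  have g1c: "\<And>i. g1 i \<in> carrier G" and g2c: "\<And>i. g2 i \<in> carrier G"
    using g Hcarr_closed by auto
  define w where "w i = inv (g1 i) \<otimes> g2 i" for i
  have wc: "w i \<in> carrier G" for i unfolding w_def using g1c g2c by simp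
  have "{i. w i \<noteq> \<one>} \<subseteq> {i. g1 i \<noteq> \<one>} \<union> {i. g2 i \<noteq> \<one>}"
    unfolding w_def by auto
  then have "finite {i. w i \<noteq> \<one>}" using Hcarr_fin[OF g(1)] Hcarr_fin[OF g(2)]
    by (meson finite_UnI finite_subset)
  then have wH: "w \<in> Hcarr G" unfolding Hcarr_def using wc by auto
  from disj show ?thesis
  proof
    assume h: "HP G xs hs = Hprod_list G [g1, shift (Hinv G g1), shift g2, Hinv G g2]"
    have "HP G xs (map (\<lambda>x. inv x) hs) i = inv (HP G xs hs i)" for i
      using fun_cong[OF inv_HP[OF d1 l1 hc], of i] by simp
    then have eq: "inv (g1 i) \<otimes> HP G xs (map (\<lambda>x. inv x) hs) i \<otimes> g1 i = w i \<otimes> inv (w (i+1))" for i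
      unfolding h Hprod4 using g1c g2c
      by (simp add: w_def shift_def Hinv_def m_assoc inv_mult_group)
    have "Qc (map (\<lambda>x. inv x) hs)"
      by (rule Q_of[OF s1 _ ihc g1c wH eq]) (use l1 in simp)
    then obtain c v where cv: "\<forall>i. c i \<in> carrier G" "finite {i. c i \<noteq> \<one>}" "v \<in> Hcarr G"
       "\<forall>i. inv (c i) \<otimes> HP G ys (map (\<lambda>x. inv x) hs) i \<otimes> c i = v i \<otimes> inv (v (i+1))"
      using from_Q[OF s2 _ ihc] l2 by auto
    have vc: "\<And>i. v i \<in> carrier G" using cv(3) Hcarr_closed by auto
    define k2 where "k2 i = c i \<otimes> v i" for i
    have "{i. k2 i \<noteq> \<one>} \<subseteq> {i. c i \<noteq> \<one>} \<union> {i. v i \<noteq> \<one>}"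
      unfolding k2_def using cv(1) vc by auto
    then have "finite {i. k2 i \<noteq> \<one>}" using cv(2) Hcarr_fin[OF cv(3)]
      by (meson finite_UnI finite_subset)
    then have k2H: "k2 \<in> Hcarr G" unfolding Hcarr_def k2_def using cv(1) vc by auto
    have cH: "c \<in> Hcarr G" unfolding Hcarr_def using cv by auto
    have "HP G ys hs i = Hprod_list G [c, shift (Hinv G c), shift k2, Hinv G k2] i" for i
    proof -
      have hyc: "HP G ys hs i \<in> carrier G" by (rule HP_closed[OF hc])
      have iv: "HP G ys (map (\<lambda>x. inv x) hs) i = inv (HP G ys hs i)"
        using fun_cong[OF inv_HP[OF d2 l2 hc], of i] by simp
      have e: "inv (c i) \<otimes> inv (HP G ys hs i) \<otimes> c i = v i \<otimes> inv (v (i+1))"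
        using cv(4)[rule_format, of i] unfolding iv .
      have "HP G ys hs i = c i \<otimes> inv (inv (c i) \<otimes> inv (HP G ys hs i) \<otimes> c i) \<otimes> inv (c i)"
        using cv(1) hyc by (simp add: m_assoc inv_mult_group)
      also have "\<dots> = c i \<otimes> (inv (c (i+1)) \<otimes> ((c (i+1) \<otimes> v (i+1)) \<otimes> (inv (c i \<otimes> v i) \<otimes> \<one>)))"
        unfolding e using cv(1) vc by (simp add: m_assoc inv_mult_group)
      finally show ?thesis unfolding Hprod4 by (simp add: k2_def shift_def Hinv_def)
    qed
    then have "HP G ys hs = Hprod_list G [c, shift (Hinv G c), shift k2, Hinv G k2]" by blast
    then show ?thesis unfolding pm_comm_def using cH k2H by blast
  next
    assume h: "HP G xs hs = Hprod_list G [shift g1, Hinv G g1, g2, shift (Hinv G g2)]"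
    have eq: "inv (shift g1 i) \<otimes> HP G xs hs i \<otimes> shift g1 i = w i \<otimes> inv (w (i+1))" for i
      unfolding h Hprod4 using g1c g2c
      by (simp add: w_def shift_def Hinv_def m_assoc inv_mult_group)
    have "Qc hs"
      by (rule Q_of[OF s1 l1 hc _ wH eq]) (simp add: shift_def g1c)
    then obtain c v where cv: "\<forall>i. c i \<in> carrier G" "finite {i. c i \<noteq> \<one>}" "v \<in> Hcarr G"
       "\<forall>i. inv (c i) \<otimes> HP G ys hs i \<otimes> c i = v i \<otimes> inv (v (i+1))"
      using from_Q[OF s2 l2 hc] by auto
    have vc: "\<And>i. v i \<in> carrier G" using cv(3) Hcarr_closed by auto
    define k1 where "k1 i = c (i - 1)" for i
    define k2 where "k2 i = k1 i \<otimes> v i" for i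
    have k1c: "\<And>i. k1 i \<in> carrier G" unfolding k1_def using cv(1) by simp
    have "{i. k1 i \<noteq> \<one>} = (\<lambda>i. i + 1) ` {i. c i \<noteq> \<one>}"
      unfolding k1_def by (auto simp: image_iff) (metis diff_add_cancel)
    then have k1f: "finite {i. k1 i \<noteq> \<one>}" using cv(2) by simp
    then have k1H: "k1 \<in> Hcarr G" unfolding Hcarr_def using k1c by auto
    have "{i. k2 i \<noteq> \<one>} \<subseteq> {i. k1 i \<noteq> \<one>} \<union> {i. v i \<noteq> \<one>}"
      unfolding k2_def using k1c vc by auto
    then have "finite {i. k2 i \<noteq> \<one>}" using k1f Hcarr_fin[OF cv(3)]
      by (meson finite_UnI finite_subset)
    then have k2H: "k2 \<in> Hcarr G" unfolding Hcarr_def k2_def using k1c vc by auto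
    have "HP G ys hs i = Hprod_list G [shift k1, Hinv G k1, k2, shift (Hinv G k2)] i" for i
    proof -
      have hyc: "HP G ys hs i \<in> carrier G" by (rule HP_closed[OF hc])
      have "HP G ys hs i = c i \<otimes> (inv (c i) \<otimes> HP G ys hs i \<otimes> c i) \<otimes> inv (c i)"
        using cv(1) hyc by (simp add: m_assoc)
      also have "\<dots> = c i \<otimes> (inv (c (i - 1)) \<otimes> ((c (i - 1) \<otimes> v i) \<otimes> (inv (c i \<otimes> v (i+1)) \<otimes> \<one>)))"
        using cv(1,4) vc by (simp add: m_assoc inv_mult_group)
      finally show ?thesis unfolding Hprod4 by (simp add: k1_def k2_def shift_def Hinv_def)
    qed
    then have "HP G ys hs = Hprod_list G [shift k1, Hinv G k1, k2, shift (Hinv G k2)]" by blast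
    then show ?thesis unfolding pm_comm_def using k1H k2H by blast
  qed
qed


lemma all2:
  assumes S1: "S1 G" and fc: "\<And>i. f i \<in> carrier G" and ff: "finite {i. f i \<noteq> \<one>}"
  shows "\<exists>x\<in>Hcarr G. \<exists>y\<in>Hcarr G. \<forall>i. f i = x i \<otimes> inv (x (i+1)) \<otimes> (y i \<otimes> inv (y (i+1)))"
proof -
  obtain B where B: "0 < B" "\<forall>i\<in>{i. f i \<noteq> \<one>}. -B < i \<and> i < B"
    using int_bound[OF ff] by auto
  define M where "M = -B"
  define N where "N = B"
  have supp: "\<And>i. f i \<noteq> \<one> \<Longrightarrow> M \<le> i \<and> i < N" using B unfolding M_def N_def by force
  define p where "p = pu G f M (nat (N - M))"
  have pc: "p \<in> carrier G" unfolding p_def by (rule pu_closed[OF fc])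
  obtain a b where ab: "a \<in> carrier G" "b \<in> carrier G" "p = inv a \<otimes> inv \<one> \<otimes> b \<otimes> a \<otimes> inv b"
    using S1 pc unfolding S1_def by blast
  define w where "w i = pu G f i (nat (N - i))" for i
  have wc: "w i \<in> carrier G" for i unfolding w_def by (rule pu_closed[OF fc])
  have weq: "f i = w i \<otimes> inv (w (i+1))" for i
  proof (cases "i < N")
    case True
    then have "nat (N - i) = Suc (nat (N - (i+1)))" by simp
    then have "w i = f i \<otimes> w (i+1)" unfolding w_def by simp
    then show ?thesis using fc wc by (simp add: m_assoc)
  next
    case False
    then have "w i = \<one>" "w (i+1) = \<one>" unfolding w_def by auto
    moreover have "f i = \<one>" using supp False by force
    ultimately show ?thesis by simp
  qed
  have wM: "w M = p" unfolding w_def p_def ..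
  define X where "X i = (if M \<le> i then w i else if i = M - 1 then inv b else if i = M - 2 then inv a else \<one>)" for i
  define Y where "Y i = (if i = M - 1 then inv a \<otimes> b \<otimes> a else if i = M - 2 then a else \<one>)" for i
  have Xc: "X i \<in> carrier G" for i unfolding X_def using wc ab by auto
  have Yc: "Y i \<in> carrier G" for i unfolding Y_def using ab by auto
  have eq: "f i = X i \<otimes> inv (X (i+1)) \<otimes> (Y i \<otimes> inv (Y (i+1)))" for i
  proof -
    consider "M \<le> i" | "i = M - 1" | "i = M - 2" | "i = M - 3" | "i < M - 3" by linarith
    then show ?thesis
    proof cases
      case 1
      then show ?thesis using weq[of i] wc by (simp add: X_def Y_def)
    next
      case 2
      then have "f i = \<one>" using supp by force
      then show ?thesis using 2 ab wM by (simp add: X_def Y_def m_assoc inv_mult_group)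
    next
      case 3
      then have "f i = \<one>" using supp by force
      then show ?thesis using 3 ab by (simp add: X_def Y_def m_assoc inv_mult_group)
    next
      case 4
      then have "f i = \<one>" using supp by force
      then show ?thesis using 4 ab by (simp add: X_def Y_def m_assoc inv_mult_group)
    next
      case 5
      then have "f i = \<one>" using supp by force
      then show ?thesis using 5 ab by (simp add: X_def Y_def)
    qed
  qed
  have "w i = \<one>" if "N \<le> i" for i unfolding w_def using that by simp
  then have wN: "\<forall>i. w i \<noteq> \<one> \<longrightarrow> i < N" by (meson not_le)
  have MN: "M < N" unfolding M_def N_def using B by simp
  have "{i. X i \<noteq> \<one>} \<subseteq> {M - 2..<N}" unfolding X_def using wN MN by (auto split: if_splits)
  then have XH: "X \<in> Hcarr G" unfolding Hcarr_def using Xc finite_subset by auto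
  have "{i. Y i \<noteq> \<one>} \<subseteq> {M - 2, M - 1}" unfolding Y_def by auto
  then have YH: "Y \<in> Hcarr G" unfolding Hcarr_def using Yc finite_subset by auto
  show ?thesis using XH YH eq by blast
qed

lemma Hprod_ones: "Hprod_list G (map F (replicate m (Hone G))) i = \<one>" if "F (Hone G) = Hone G"
  using that by (induction m) (auto simp: Hmul_def Hone_def)

lemma ktk_all:
  assumes S1: "S1 G" and fc: "\<And>i. f i \<in> carrier G" and ff: "finite {i. f i \<noteq> \<one>}"
    and k: "2 \<le> \<bar>k\<bar>"
  shows "kt_comm G k f"
proof (cases "0 < k")
  case True
  obtain x y where xy: "x \<in> Hcarr G" "y \<in> Hcarr G"
      "\<forall>i. f i = x i \<otimes> inv (x (i+1)) \<otimes> (y i \<otimes> inv (y (i+1)))"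
    using all2[OF S1 fc ff] by blast
  define F where "F = (\<lambda>g. Hmul G g (shift (Hinv G g)))"
  define gs where "gs = [x, y] @ replicate (nat k - 2) (Hone G)"
  have F1: "F (Hone G) = Hone G" unfolding F_def by (simp add: Hmul_def shift_def Hinv_def Hone_def)
  have "Hprod_list G (map F gs) = f"
  proof
    fix i
    show "Hprod_list G (map F gs) i = f i" 
  proof -
    have "Hprod_list G (map F gs) i = F x i \<otimes> (F y i \<otimes> Hprod_list G (map F (replicate (nat k - 2) (Hone G))) i)"
      unfolding gs_def by (simp add: Hmul_def)
    also have "Hprod_list G (map F (replicate (nat k - 2) (Hone G))) i = \<one>" by (rule Hprod_ones) (rule F1)
    finally show ?thesis using xy Hcarr_closed[OF xy(1)] Hcarr_closed[OF xy(2)]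
      by (simp add: F_def Hmul_def shift_def Hinv_def m_assoc)
  qed
  qed
  moreover have "length gs = nat k" unfolding gs_def using k True by simp
  moreover have "Hone G \<in> Hcarr G" unfolding Hcarr_def Hone_def by simp
  then have "set gs \<subseteq> Hcarr G" unfolding gs_def using xy by auto
  ultimately show ?thesis unfolding kt_comm_def F_def using True by metis
next
  case False
  then have kn: "k < 0" using k by simp
  have fic: "\<And>i. inv (f i) \<in> carrier G" using fc by simp
  have "{i. inv (f i) \<noteq> \<one>} = {i. f i \<noteq> \<one>}" using fc by (metis inv_eq_1_iff)
  then have fif: "finite {i. inv (f i) \<noteq> \<one>}" using ff by simp
  obtain x y where xy: "x \<in> Hcarr G" "y \<in> Hcarr G"
      "\<forall>i. inv (f i) = x i \<otimes> inv (x (i+1)) \<otimes> (y i \<otimes> inv (y (i+1)))"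
    using all2[OF S1 fic fif] by blast
  define F where "F = (\<lambda>g. Hmul G (shift g) (Hinv G g))"
  define gs where "gs = [y, x] @ replicate (nat (-k) - 2) (Hone G)"
  have F1: "F (Hone G) = Hone G" unfolding F_def by (simp add: Hmul_def shift_def Hinv_def Hone_def)
  have "Hprod_list G (map F gs) = f"
  proof
    fix i
    show "Hprod_list G (map F gs) i = f i" 
  proof -
    have xc: "\<And>i. x i \<in> carrier G" and yc: "\<And>i. y i \<in> carrier G" using xy Hcarr_closed by auto
    have "Hprod_list G (map F gs) i = F y i \<otimes> (F x i \<otimes> Hprod_list G (map F (replicate (nat (-k) - 2) (Hone G))) i)"
      unfolding gs_def by (simp add: Hmul_def)
    also have "Hprod_list G (map F (replicate (nat (-k) - 2) (Hone G))) i = \<one>" by (rule Hprod_ones) (rule F1)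
    also have "F y i \<otimes> (F x i \<otimes> \<one>) = inv (inv (f i))"
      using xy(3) xc yc by (simp add: F_def Hmul_def shift_def Hinv_def m_assoc inv_mult_group)
    finally show ?thesis using fc by simp
  qed
  qed
  moreover have "length gs = nat (-k)" unfolding gs_def using k kn by simp
  moreover have "Hone G \<in> Hcarr G" unfolding Hcarr_def Hone_def by simp
  then have "set gs \<subseteq> Hcarr G" unfolding gs_def using xy by auto
  ultimately show ?thesis unfolding kt_comm_def F_def using kn by metis
qed

end

lemma ys_eq: "Hprod_list G (map (\<lambda>(j, h). sgl G (int j) h) (zip js hs)) = HP G (map int js) hs"
  unfolding HP_def zip_map1 map_map by (simp add: o_def case_prod_unfold)

lemma ys_sorted: "sorted_wrt (<) (map int [1..<n])"
  by (simp add: sorted_wrt_map)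

theorem lemma4p8:
  fixes G :: "('a, 'b) monoid_scheme"
    and "is" :: "int list" and hs :: "'a list"
  assumes "group G" and "finite (carrier G)"
    and "S1 G" and "S2 G" and "S3 G" and "S4 G"
    and "sorted_wrt (<) is" and "length hs = length is"
    and "set hs \<subseteq> carrier G" and "\<one>\<^bsub>G\<^esub> \<notin> set hs"
  shows "(\<forall>k::int. k \<noteq> 0 \<longrightarrow>
            kt_comm G k (Hprod_list G (map (\<lambda>(i, h). sgl G i h) (zip is hs))) \<longrightarrow>
            kt_comm G k (Hprod_list G (map (\<lambda>(j, h). sgl G (int j) h) (zip [1..<length hs + 1] hs))))
       \<and> (pm_comm G (Hprod_list G (map (\<lambda>(i, h). sgl G i h) (zip is hs))) \<longrightarrow>
            pm_comm G (Hprod_list G (map (\<lambda>(j, h). sgl G (int j) h) (zip [1..<length hs + 1] hs))))"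
proof -
  interpret group G by (rule assms(1))
  define ys where "ys = map int [1..<length hs + 1]"
  have s1: "sorted_wrt (<) is" and l1: "length is = length hs" and hc: "set hs \<subseteq> carrier G"
    using assms by auto
  have s2: "sorted_wrt (<) ys" unfolding ys_def by (rule ys_sorted)
  have l2: "length ys = length hs" unfolding ys_def length_map length_upt by simp
  have d1: "distinct is" using s1 by (simp add: strict_sorted_iff)
  have d2: "distinct ys" using s2 by (simp add: strict_sorted_iff)
  have X: "Hprod_list G (map (\<lambda>(i, h). sgl G i h) (zip is hs)) = HP G is hs" unfolding HP_def ..
  have Y: "Hprod_list G (map (\<lambda>(j, h). sgl G (int j) h) (zip [1..<length hs + 1] hs)) = HP G ys hs"
    unfolding ys_def by (rule ys_eq)
  have ihc: "set (map (\<lambda>x. inv\<^bsub>G\<^esub> x) hs) \<subseteq> carrier G" using hc by auto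
  have part1: "kt_comm G k (HP G ys hs)" if k0: "k \<noteq> 0" and K: "kt_comm G k (HP G is hs)" for k
  proof -
    consider "2 \<le> \<bar>k\<bar>" | "k = 1" | "k = -1" using k0 by linarith
    then show ?thesis
    proof cases
      case 1
      have H: "HP G ys hs \<in> Hcarr G" by (rule HP_Hcarr[OF hc])
      show ?thesis by (rule ktk_all[OF assms(3) Hcarr_closed[OF H] Hcarr_fin[OF H] 1])
    next
      case 2
      have "T1 (HP G is hs)" using K 2 kt1_iff[of "HP G is hs"] HP_closed[OF hc] by simp
      then have "T1 (HP G ys hs)" by (rule T1_HP[OF s1 l1 s2 l2 hc])
      then show ?thesis using 2 kt1_iff[of "HP G ys hs"] HP_closed[OF hc] by simp
    next
      case 3
      have "T1 (\<lambda>i. inv\<^bsub>G\<^esub> (HP G is hs i))" using K 3 ktm1_iff[of "HP G is hs"] HP_closed[OF hc] by simp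
      then have Ti: "T1 (HP G is (map (\<lambda>x. inv\<^bsub>G\<^esub> x) hs))" unfolding inv_HP[OF d1 l1 hc] .
      have "T1 (HP G ys (map (\<lambda>x. inv\<^bsub>G\<^esub> x) hs))" using T1_HP[OF s1 _ s2 _ ihc Ti] l1 l2 by simp
      then have "T1 (\<lambda>i. inv\<^bsub>G\<^esub> (HP G ys hs i))" unfolding inv_HP[OF d2 l2 hc] .
      then show ?thesis using 3 ktm1_iff[of "HP G ys hs"] HP_closed[OF hc] by simp
    qed
  qed
  have part2: "pm_comm G (HP G ys hs)" if "pm_comm G (HP G is hs)"
    by (rule pm_HP[OF s1 l1 s2 l2 hc that])
  show ?thesis unfolding X Y using part1 part2 by blast
qed

end
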